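(* Let $G$ be an infinite group such that $[e]_g$ is a subgroup of $G$ for every $g\in G$. Then $G$ has infinitely many conjugacy classes.
   Context: $[x,y]=x^{-1}y^{-1}xy$; $[e]_g=\{[x,g]\mid x\in G\}$. *)

theory Defs
  imports "HOL-Algebra.Algebra"
begin

definition commutator :: "('a, 'b) monoid_scheme \<Rightarrow> 'a \<Rightarrow> 'a \<Rightarrow> 'a" where
  "commutator G x y = inv\<^bsub>G\<^esub> x \<otimes>\<^bsub>G\<^esub> inv\<^bsub>G\<^esub> y \<otimes>\<^bsub>G\<^esub> x \<otimes>\<^bsub>G\<^esub> y"

text \<open>[e]_g = { [x,g] | x in G }.\<close>
definition comm_set :: "('a, 'b) monoid_scheme \<Rightarrow> 'a \<Rightarrow> 'a set" where
  "comm_set G g = {commutator G x g | x. x \<in> carrier G}"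

definition conj_class :: "('a, 'b) monoid_scheme \<Rightarrow> 'a \<Rightarrow> 'a set" where
  "conj_class G g = {inv\<^bsub>G\<^esub> x \<otimes>\<^bsub>G\<^esub> g \<otimes>\<^bsub>G\<^esub> x | x. x \<in> carrier G}"

definition conj_classes :: "('a, 'b) monoid_scheme \<Rightarrow> 'a set set" where
  "conj_classes G = conj_class G ` carrier G"

end

theory Submission
  imports Defs
begin

context group
begin

lemma canc1: "x \<in> carrier G \<Longrightarrow> z \<in> carrier G \<Longrightarrow> x \<otimes> (inv x \<otimes> z) = z"
  by (metis inv_closed m_assoc r_inv l_one)
lemma canc2: "x \<in> carrier G \<Longrightarrow> z \<in> carrier G \<Longrightarrow> inv x \<otimes> (x \<otimes> z) = z"
  by (metis inv_closed m_assoc l_inv l_one)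

lemma comm_mul_inv:
  assumes "x \<in> carrier G" "g \<in> carrier G"
  shows "commutator G x g \<otimes> inv g = inv x \<otimes> inv g \<otimes> x"
  using assms by (simp add: commutator_def m_assoc)

lemma conj_eq_image:
  assumes "g \<in> carrier G"
  shows "conj_class G (inv g) = (\<lambda>k. k \<otimes> inv g) ` comm_set G g"
proof
  show "conj_class G (inv g) \<subseteq> (\<lambda>k. k \<otimes> inv g) ` comm_set G g"
  proof
    fix c assume "c \<in> conj_class G (inv g)"
    then obtain x where x: "x \<in> carrier G" "c = inv x \<otimes> inv g \<otimes> x" by (auto simp: conj_class_def)
    have "commutator G x g \<in> comm_set G g" using x by (auto simp: comm_set_def)
    moreover have "c = commutator G x g \<otimes> inv g" using x assms comm_mul_inv by simp
    ultimately show "c \<in> (\<lambda>k. k \<otimes> inv g) ` comm_set G g" by blast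
  qed
  show "(\<lambda>k. k \<otimes> inv g) ` comm_set G g \<subseteq> conj_class G (inv g)"
    using assms by (auto simp: conj_class_def comm_set_def comm_mul_inv)
qed

lemma comm_conj_closed:
  assumes "g \<in> carrier G" "subgroup (comm_set G g) G"
    and "y \<in> carrier G" "m \<in> comm_set G g"
  shows "inv y \<otimes> m \<otimes> y \<in> comm_set G g"
proof -
  obtain x where x: "x \<in> carrier G" "m = commutator G x g"
    using assms(4) by (auto simp: comm_set_def)
  have "inv y \<otimes> m \<otimes> y = commutator G (x \<otimes> y) g \<otimes> inv (commutator G y g)"
    using x assms(1,3) by (simp add: commutator_def inv_mult_group m_assoc canc1)
  moreover have "commutator G (x \<otimes> y) g \<in> comm_set G g"
    using x assms(1,3) by (auto simp: comm_set_def)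
  moreover have "commutator G y g \<in> comm_set G g"
    using assms(1,3) by (auto simp: comm_set_def)
  ultimately show ?thesis
    using subgroup.m_closed[OF assms(2)] subgroup.m_inv_closed[OF assms(2)] by metis
qed

lemma comm_sub:
  assumes "g \<in> M" "subgroup M G" "\<forall>x\<in>carrier G. \<forall>m\<in>M. inv x \<otimes> m \<otimes> x \<in> M"
  shows "comm_set G g \<subseteq> M"
proof
  fix c assume "c \<in> comm_set G g"
  then obtain x where x: "x \<in> carrier G" "c = commutator G x g" by (auto simp: comm_set_def)
  have gc: "g \<in> carrier G" using assms subgroup.subset by blast
  have "inv g \<in> M" using assms by (simp add: subgroup.m_inv_closed)
  hence "inv x \<otimes> inv g \<otimes> x \<in> M" using assms x by blast
  hence "(inv x \<otimes> inv g \<otimes> x) \<otimes> g \<in> M" using assms by (simp add: subgroup.m_closed)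
  thus "c \<in> M" using x by (simp add: commutator_def)
qed

lemma conj_one: "conj_class G \<one> = {\<one>}"
proof
  show "conj_class G \<one> \<subseteq> {\<one>}" by (auto simp: conj_class_def)
  have "\<one> = inv \<one> \<otimes> \<one> \<otimes> \<one>" by simp
  thus "{\<one>} \<subseteq> conj_class G \<one>" unfolding conj_class_def by blast
qed

lemma key:
  assumes fin: "finite (conj_classes G)"
    and sg: "\<forall>g \<in> carrier G. subgroup (comm_set G g) G"
  shows "\<forall>M. card {C\<in>conj_classes G. C \<subseteq> M} = n \<longrightarrow> subgroup M G \<longrightarrow>
     (\<forall>x\<in>carrier G. \<forall>m\<in>M. inv x \<otimes> m \<otimes> x \<in> M) \<longrightarrow> finite M"
proof (induction n rule: less_induct)
  case (less n)
  show ?case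
  proof (intro allI impI)
    fix M assume cM: "card {C\<in>conj_classes G. C \<subseteq> M} = n" and sM: "subgroup M G"
      and nM: "\<forall>x\<in>carrier G. \<forall>m\<in>M. inv x \<otimes> m \<otimes> x \<in> M"
    show "finite M"
    proof (rule ccontr)
      assume infM: "infinite M"
      have Msub: "M \<subseteq> carrier G" using sM subgroup.subset by blast
      have cls: "\<And>m. m \<in> M \<Longrightarrow> conj_class G m \<subseteq> M"
        using nM by (auto simp: conj_class_def)
      have mem: "\<And>m. m \<in> carrier G \<Longrightarrow> m \<in> conj_class G m"
      proof -
        fix m assume "m \<in> carrier G"
        hence "m = inv \<one> \<otimes> m \<otimes> \<one>" by simp
        thus "m \<in> conj_class G m" unfolding conj_class_def by blast
      qed
      have MU: "M \<subseteq> \<Union>{C\<in>conj_classes G. C \<subseteq> M}"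
      proof
        fix m assume m: "m \<in> M"
        hence "conj_class G m \<in> {C\<in>conj_classes G. C \<subseteq> M}"
          using cls Msub by (auto simp: conj_classes_def)
        moreover have "m \<in> conj_class G m" using mem m Msub by blast
        ultimately show "m \<in> \<Union>{C\<in>conj_classes G. C \<subseteq> M}" by blast
      qed
      have finS: "finite {C\<in>conj_classes G. C \<subseteq> M}" using fin by simp
      have "\<exists>C\<in>{C\<in>conj_classes G. C \<subseteq> M}. infinite C"
      proof (rule ccontr)
        assume "\<not> ?thesis"
        hence "\<forall>C\<in>{C\<in>conj_classes G. C \<subseteq> M}. finite C" by simp
        hence "finite (\<Union>{C\<in>conj_classes G. C \<subseteq> M})"
          using finS by (rule_tac finite_Union) auto
        thus False using infM MU
          by (meson finite_subset)
      qed
      then obtain C where C: "C \<in> conj_classes G" "C \<subseteq> M" "infinite C"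
        by blast
      then obtain h where h: "h \<in> carrier G" "C = conj_class G h"
        by (auto simp: conj_classes_def)
      have hM: "h \<in> M" using C h mem by blast
      define g where "g = inv h"
      have gc: "g \<in> carrier G" and ig: "inv g = h" using h by (auto simp: g_def)
      have gM: "g \<in> M" using hM sM by (simp add: g_def subgroup.m_inv_closed)
      define H where "H = comm_set G g"
      have sH: "subgroup H G" using sg gc H_def by simp
      have nH: "\<forall>x\<in>carrier G. \<forall>m\<in>H. inv x \<otimes> m \<otimes> x \<in> H"
        using comm_conj_closed gc sH H_def by blast
      have HM: "H \<subseteq> M" using comm_sub gM sM nM H_def by blast
      have CH: "C = (\<lambda>k. k \<otimes> h) ` H" using conj_eq_image[OF gc] h ig H_def by simp
      have infH: "infinite H" using C(3) CH by auto
      have notCH: "\<not> C \<subseteq> H"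
      proof
        assume "C \<subseteq> H"
        hence hH: "h \<in> H" using mem h by blast
        have "\<one> \<in> C"
        proof -
          have "inv h \<in> H" using hH sH by (simp add: subgroup.m_inv_closed)
          moreover have "inv h \<otimes> h = \<one>" using h by simp
          ultimately show ?thesis using CH by force
        qed
        hence "\<one> \<in> conj_class G h" using h(2) by simp
        then obtain x where x: "x \<in> carrier G" "\<one> = inv x \<otimes> h \<otimes> x"
          unfolding conj_class_def by blast
        have q0: "x \<otimes> (inv x \<otimes> h \<otimes> x) \<otimes> inv x = h"
          using x(1) h(1) by (simp add: m_assoc canc1)
        have e: "inv x \<otimes> h \<otimes> x = \<one>" using x(2) by (rule sym)
        have q: "x \<otimes> \<one> \<otimes> inv x = h" using q0 unfolding e .
        have q2: "x \<otimes> \<one> \<otimes> inv x = \<one>" using x(1) by simp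
        have "h = \<one>" using trans[OF sym[OF q] q2] .
        hence "C = {\<one>}" using h(2) conj_one by simp
        thus False using C(3) by simp
      qed
      have sub: "{C\<in>conj_classes G. C \<subseteq> H} \<subset> {C\<in>conj_classes G. C \<subseteq> M}"
      proof
        show "{C\<in>conj_classes G. C \<subseteq> H} \<subseteq> {C\<in>conj_classes G. C \<subseteq> M}"
          using HM by auto
        show "{C\<in>conj_classes G. C \<subseteq> H} \<noteq> {C\<in>conj_classes G. C \<subseteq> M}"
        proof
          assume "{C\<in>conj_classes G. C \<subseteq> H} = {C\<in>conj_classes G. C \<subseteq> M}"
          moreover have "C \<in> {C\<in>conj_classes G. C \<subseteq> M}" using C by simp
          ultimately have "C \<in> {C\<in>conj_classes G. C \<subseteq> H}" by (rule ssubst)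
          hence "C \<subseteq> H" by simp
          thus False using notCH by simp
        qed
      qed
      have lt: "card {C\<in>conj_classes G. C \<subseteq> H} < n"
        using psubset_card_mono[OF _ sub] fin cM by simp
      have "finite H" using less[OF lt] sH nH by blast
      thus False using infH by simp
    qed
  qed
qed

end

theorem mainTheorem7:
  fixes G :: "('a, 'b) monoid_scheme"
  assumes "group G"
    and "infinite (carrier G)"
    and "\<forall>g \<in> carrier G. subgroup (comm_set G g) G"
  shows "infinite (conj_classes G)"
proof
  assume fin: "finite (conj_classes G)"
  interpret group G by fact
  have "subgroup (carrier G) G" by (simp add: subgroup_self)
  moreover have "\<forall>x\<in>carrier G. \<forall>m\<in>carrier G. inv\<^bsub>G\<^esub> x \<otimes>\<^bsub>G\<^esub> m \<otimes>\<^bsub>G\<^esub> x \<in> carrier G"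
    by simp
  ultimately have "finite (carrier G)" using key[OF fin assms(3)] by blast
  thus False using assms(2) by simp
qed

end
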